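(* Let $\theta\in\Theta\subset\mathbb R^{d_\theta}$ and $\beta\in\mathcal B\subset\mathbb R^{d_\beta}$ with $\mathcal B$ convex, and let $m:\mathcal W\times\Theta\times\mathcal B\to\mathbb R^{d_m}$ satisfy $\mathrm E_P[m(W;\theta_0,\beta_0)]=0$. Suppose $G_\beta=\partial_{\beta'}\mathrm E_P[m(W;\theta,\beta)]|_{(\theta_0,\beta_0)}$ exists, let $\Omega$ be a positive definite $d_m\times d_m$ matrix, $A$ a $d_m\times d_\theta$ matrix, $L:=\Omega^{-1/2}G_\beta$, $r_N>0$, and let $\gamma_0$ be a solution of $$\min\|\gamma\|_o\quad\text{such that}\quad\|A'\Omega^{-1/2}L-\gamma L'L\|_\infty\le r_N$$ for a norm $\|\cdot\|_o$, where $\|\cdot\|_\infty$ is the maximal absolute entry. Set $\mu_0:=A'\Omega^{-1}-\gamma_0L'\Omega^{-1/2}$, $\eta_0=(\beta_0',\mathrm{vec}(\mu_0)')'$, and $\psi(W;\theta,\eta)=\mu\,m(W;\theta,\beta)$ for $\eta=(\beta',\mathrm{vec}(\mu)')'\in\mathcal B\times\mathbb R^{d_\theta d_m}$. Then, for any sequence of positive constants $\lambda_N=o(N^{-1/2})$, $\psi$ is Neyman $\lambda_N$ near-orthogonal at $(\theta_0,\eta_0)$ with respect to the nuisance realization set $\mathcal T_N=\{\beta\in\mathcal B:\|\beta-\beta_0\|_1\le\lambda_N/r_N\}\times\mathbb R^{d_\theta d_m}$.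
   Context: A score $\psi$ obeys the Neyman $\lambda_N$ near-orthogonality condition at $(\theta_0,\eta_0)$ with respect to $\mathcal T_N\subset T$ if $\mathrm E_P[\psi(W;\theta_0,\eta_0)]=0$, the pathwise derivative $\mathrm D_r[\eta-\eta_0]:=\partial_r\mathrm E_P[\psi(W;\theta_0,\eta_0+r(\eta-\eta_0))]$ exists for all $r\in[0,1)$ and $\eta\in\mathcal T_N$, and $\|\mathrm D_0[\eta-\eta_0]\|\le\lambda_N$ for all $\eta\in\mathcal T_N$, where $(\lambda_N)$ is a sequence of positive constants with $\lambda_N=o(N^{-1/2})$. *)

theory Defs
  imports "HOL-Probability.Probability" "HOL-Library.Landau_Symbols"
begin

text \<open>Positive definite (symmetric) matrix.\<close>
definition pos_def_mat :: "real^'n^'n \<Rightarrow> bool" where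
  "pos_def_mat M \<longleftrightarrow> transpose M = M \<and> (\<forall>x. x \<noteq> 0 \<longrightarrow> x \<bullet> (M *v x) > 0)"

text \<open>The inverse symmetric square root of a positive definite matrix.\<close>
definition inv_sqrt_mat :: "real^'n^'n \<Rightarrow> real^'n^'n" where
  "inv_sqrt_mat M = (THE S. pos_def_mat S \<and> S ** S = matrix_inv M)"

text \<open>Maximal absolute entry of a matrix / vector, and the l1 norm of a vector.\<close>
definition max_abs_entry :: "real^'c^'r \<Rightarrow> real" where
  "max_abs_entry M = Max {\<bar>M $ i $ j\<bar> | i j. True}"

definition vec_sup_norm :: "real^'n \<Rightarrow> real" where
  "vec_sup_norm v = Max (range (\<lambda>i. \<bar>v $ i\<bar>))"

definition vec_l1_norm :: "real^'n \<Rightarrow> real" where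
  "vec_l1_norm v = (\<Sum>i\<in>UNIV. \<bar>v $ i\<bar>)"

text \<open>An arbitrary norm on a real vector space.\<close>
definition is_norm :: "('a::real_vector \<Rightarrow> real) \<Rightarrow> bool" where
  "is_norm n \<longleftrightarrow> (\<forall>x. 0 \<le> n x) \<and> (\<forall>x. n x = 0 \<longleftrightarrow> x = 0)
     \<and> (\<forall>c x. n (c *\<^sub>R x) = \<bar>c\<bar> * n x) \<and> (\<forall>x y. n (x + y) \<le> n x + n y)"

text \<open>Neyman lambda near-orthogonality for a single N (score psi, norm nrm used for the
  pathwise derivative, realization set T, bound lam).\<close>
definition neyman_near_orth ::
  "'w measure \<Rightarrow> ('w \<Rightarrow> 'th \<Rightarrow> 'e::real_vector \<Rightarrow> 'v::{banach,second_countable_topology})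
    \<Rightarrow> ('v \<Rightarrow> real) \<Rightarrow> 'th \<Rightarrow> 'e \<Rightarrow> 'e set \<Rightarrow> real \<Rightarrow> bool" where
  "neyman_near_orth P psi nrm th0 eta0 T lam \<longleftrightarrow>
     (\<integral>w. psi w th0 eta0 \<partial>P) = 0
   \<and> (\<forall>eta\<in>T. \<forall>r\<in>{0..<1}. \<exists>D.
        ((\<lambda>s. \<integral>w. psi w th0 (eta0 + s *\<^sub>R (eta - eta0)) \<partial>P) has_vector_derivative D)
          (at r within {0..<1}))
   \<and> (\<forall>eta\<in>T. \<forall>D.
        ((\<lambda>s. \<integral>w. psi w th0 (eta0 + s *\<^sub>R (eta - eta0)) \<partial>P) has_vector_derivative D)
          (at 0 within {0..<1}) \<longrightarrow> nrm D \<le> lam)"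

text \<open>Neyman near-orthogonality along a sequence: lam positive, lam = o(N^(-1/2)),
  and the condition holds for every N w.r.t. T N (the true nuisance eta0 N may
  depend on N, as gamma0 depends on r_N).\<close>
definition neyman_near_orth_seq ::
  "'w measure \<Rightarrow> ('w \<Rightarrow> 'th \<Rightarrow> 'e::real_vector \<Rightarrow> 'v::{banach,second_countable_topology})
    \<Rightarrow> ('v \<Rightarrow> real) \<Rightarrow> 'th \<Rightarrow> (nat \<Rightarrow> 'e) \<Rightarrow> (nat \<Rightarrow> 'e set) \<Rightarrow> (nat \<Rightarrow> real) \<Rightarrow> bool" where
  "neyman_near_orth_seq P psi nrm th0 eta0 T lam \<longleftrightarrow>
     (\<forall>N. lam N > 0) \<and> lam \<in> o(\<lambda>N. 1 / sqrt (real N))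
   \<and> (\<forall>N. neyman_near_orth P psi nrm th0 (eta0 N) (T N) (lam N))"

end

theory Submission
  imports Defs
begin

lemma sym_iff:
  fixes M :: "real^'n^'n"
  shows "transpose M = M \<longleftrightarrow> (\<forall>x y. x \<bullet> (M *v y) = (M *v x) \<bullet> y)"
proof -
  have e: "x \<bullet> (M *v y) = (transpose M *v x) \<bullet> y" for x y
    by (simp add: dot_lmul_matrix[symmetric])
  show ?thesis
  proof
    assume "transpose M = M" then show "\<forall>x y. x \<bullet> (M *v y) = (M *v x) \<bullet> y" using e by metis
  next
    assume h: "\<forall>x y. x \<bullet> (M *v y) = (M *v x) \<bullet> y"
    have "transpose M *v x = M *v x" for x
    proof -
      have "(transpose M *v x - M *v x) \<bullet> y = 0" for y using h e[of x y] by (simp add: inner_diff_left)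
      from this[of "transpose M *v x - M *v x"] show ?thesis by simp
    qed
    then show "transpose M = M" by (simp add: matrix_eq)
  qed
qed

lemma max_eigen:
  fixes M :: "real^'n^'n"
  assumes sym: "\<And>x y. x \<bullet> (M *v y) = (M *v x) \<bullet> y"
    and V: "subspace V" and inv: "\<And>x. x \<in> V \<Longrightarrow> M *v x \<in> V"
    and ne: "x0 \<in> V" "x0 \<noteq> 0"
  shows "\<exists>v\<in>V. norm v = 1 \<and> M *v v = (v \<bullet> (M *v v)) *\<^sub>R v"
proof -
  let ?K = "sphere 0 1 \<inter> V"
  have cK: "compact ?K" by (simp add: V closed_subspace compact_Int_closed)
  have "(1 / norm x0) *\<^sub>R x0 \<in> ?K" using ne V by (simp add: subspace_scale)
  then have neK: "?K \<noteq> {}" by blast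
  have ct: "continuous_on ?K (\<lambda>x. x \<bullet> (M *v x))" by (intro continuous_intros)
  obtain v where vK: "v \<in> ?K" and vmax: "\<And>y. y \<in> ?K \<Longrightarrow> y \<bullet> (M *v y) \<le> v \<bullet> (M *v v)"
    using continuous_attains_sup[OF cK neK ct] by blast
  define c where "c = v \<bullet> (M *v v)"
  have nv: "norm v = 1" "v \<in> V" using vK by auto
  have vv: "v \<bullet> v = 1" using nv by (simp add: dot_square_norm)
  have bound: "x \<bullet> (M *v x) \<le> c * (x \<bullet> x)" if "x \<in> V" for x
  proof (cases "x = 0")
    case True then show ?thesis by simp
  next
    case False
    define y where "y = (1 / norm x) *\<^sub>R x"
    have "y \<in> ?K" using False that V by (simp add: y_def subspace_scale)
    then have "y \<bullet> (M *v y) \<le> c" using vmax c_def by blast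
    moreover have "y \<bullet> (M *v y) = (x \<bullet> (M *v x)) / (x \<bullet> x)"
      by (simp add: y_def matrix_vector_mult_scaleR dot_square_norm power2_eq_square)
    moreover have "x \<bullet> x > 0" using False by simp
    ultimately show ?thesis by (simp add: field_simps)
  qed
  define u where "u = M *v v - c *\<^sub>R v"
  have uV: "u \<in> V" using inv nv V by (simp add: u_def subspace_diff subspace_scale)
  have uv: "u \<bullet> v = 0"
  proof -
    have "u \<bullet> v = (M *v v) \<bullet> v - c * (v \<bullet> v)" by (simp add: u_def inner_diff_left)
    also have "\<dots> = 0" unfolding vv c_def by (simp add: inner_commute)
    finally show ?thesis .
  qed
  have uMv: "u \<bullet> (M *v v) = u \<bullet> u"
  proof -
    have "u \<bullet> u = u \<bullet> (M *v v) - c * (u \<bullet> v)"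
      by (metis u_def inner_diff_right inner_scaleR_right)
    then show ?thesis using uv by simp
  qed
  define a where "a = u \<bullet> u"
  define b where "b = u \<bullet> (M *v u) - c * (u \<bullet> u)"
  have quad: "2 * t * a + t^2 * b \<le> 0" for t
  proof -
    have "v + t *\<^sub>R u \<in> V" using uV nv V by (simp add: subspace_add subspace_scale)
    from bound[OF this]
    have h1: "(v + t *\<^sub>R u) \<bullet> (M *v (v + t *\<^sub>R u)) \<le> c * ((v + t *\<^sub>R u) \<bullet> (v + t *\<^sub>R u))" .
    moreover have h2: "(v + t *\<^sub>R u) \<bullet> (M *v (v + t *\<^sub>R u)) = c + 2 * t * a + t^2 * (u \<bullet> (M *v u))"
    proof -
      have "u \<bullet> (M *v v) = v \<bullet> (M *v u)" using sym[of u v] by (simp add: inner_commute)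
      then show ?thesis
        using uMv by (simp add: matrix_vector_right_distrib matrix_vector_mult_scaleR inner_add_left inner_add_right
          c_def a_def power2_eq_square algebra_simps)
    qed
    moreover have h3: "(v + t *\<^sub>R u) \<bullet> (v + t *\<^sub>R u) = 1 + t^2 * a"
      using uv vv by (simp add: inner_add_left inner_add_right a_def power2_eq_square inner_commute)
    have "c + 2 * t * a + t^2 * (u \<bullet> (M *v u)) \<le> c * (1 + t^2 * a)" using h1 unfolding h2 h3 .
    moreover have "t^2 * (u \<bullet> (M *v u) - c * a) = t^2 * (u \<bullet> (M *v u)) - c * (t^2 * a)"
      by (simp only: right_diff_distrib mult.left_commute)
    ultimately show ?thesis unfolding b_def a_def[symmetric] by (simp add: distrib_left)
  qed
  have "a = 0"
  proof (rule ccontr)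
    assume "a \<noteq> 0"
    then have apos: "a > 0" by (simp add: a_def)
    define t where "t = a / (abs b + 1)"
    have tpos: "t > 0" using apos by (simp add: t_def)
    have tb: "t * abs b \<le> a" using apos by (simp add: t_def field_simps)
    have "t * b \<ge> - a"
    proof (cases "b \<ge> 0")
      case True then have "t * b \<ge> 0" using tpos by simp
      then show ?thesis using apos by linarith
    next
      case False then have "abs b = - b" by simp
      then show ?thesis using tb by simp
    qed
    moreover have "2 * t * a + t^2 * b = t * (2 * a + t * b)" by (simp add: power2_eq_square algebra_simps)
    moreover have "2 * a + t * b > 0" using apos \<open>t * b \<ge> - a\<close> by linarith
    ultimately have "2 * t * a + t^2 * b > 0" using tpos by simp
    with quad[of t] show False by simp
  qed
  then have "u = 0" by (simp add: a_def)
  then show ?thesis using nv by (intro bexI[of _ v]) (auto simp: u_def c_def)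
qed

lemma spectral_sub:
  fixes M :: "real^'n^'n"
  assumes sym: "\<And>x y. x \<bullet> (M *v y) = (M *v x) \<bullet> y"
  shows "subspace V \<Longrightarrow> (\<forall>x\<in>V. M *v x \<in> V) \<Longrightarrow>
    \<exists>B. B \<subseteq> V \<and> pairwise orthogonal B \<and> (\<forall>b\<in>B. norm b = 1 \<and> M *v b = (b \<bullet> (M *v b)) *\<^sub>R b)
      \<and> V \<subseteq> span B"
proof (induction "dim V" arbitrary: V rule: less_induct)
  case less
  show ?case
  proof (cases "V \<subseteq> {0}")
    case True then show ?thesis by (intro exI[of _ "{}"]) auto
  next
    case False
    then obtain x0 where x0: "x0 \<in> V" "x0 \<noteq> 0" by auto
    obtain v where v: "v \<in> V" "norm v = 1" and ev: "M *v v = (v \<bullet> (M *v v)) *\<^sub>R v"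
      using max_eigen[OF sym less.prems(1) _ x0] less.prems(2) by blast
    define c where "c = v \<bullet> (M *v v)"
    have vv: "v \<bullet> v = 1" using v by (simp add: dot_square_norm)
    define V' where "V' = {x \<in> V. v \<bullet> x = 0}"
    have sV': "subspace V'"
      using less.prems(1) unfolding V'_def subspace_def
      by (auto simp: inner_add_right)
    have iV': "\<forall>x\<in>V'. M *v x \<in> V'"
    proof
      fix x assume x: "x \<in> V'"
      have "v \<bullet> (M *v x) = (M *v v) \<bullet> x" by (rule sym)
      also have "\<dots> = c * (v \<bullet> x)" using ev by (metis c_def inner_scaleR_left)
      also have "\<dots> = 0" using x by (simp add: V'_def)
      finally show "M *v x \<in> V'" using x less.prems(2) by (simp add: V'_def)
    qed
    have "v \<notin> V'" using vv by (simp add: V'_def)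
    moreover have "V' \<subseteq> V" by (auto simp: V'_def)
    ultimately have "V' \<subset> V" using v(1) by blast
    then have "span V' \<subset> span V" using sV' less.prems(1) by (metis span_eq_iff)
    then have "dim V' < dim V" by (rule dim_psubset)
    from less.hyps[OF this sV' iV'] obtain B' where
      B': "B' \<subseteq> V'" "pairwise orthogonal B'" "\<forall>b\<in>B'. norm b = 1 \<and> M *v b = (b \<bullet> (M *v b)) *\<^sub>R b"
        "V' \<subseteq> span B'" by blast
    show ?thesis
    proof (intro exI[of _ "insert v B'"] conjI)
      show "insert v B' \<subseteq> V" using B'(1) v by (auto simp: V'_def)
      show "pairwise orthogonal (insert v B')"
        using B'(1,2) by (intro pairwise_orthogonal_insert) (auto simp: V'_def orthogonal_def)
      show "\<forall>b\<in>insert v B'. norm b = 1 \<and> M *v b = (b \<bullet> (M *v b)) *\<^sub>R b"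
        using B'(3) v ev by auto
      show "V \<subseteq> span (insert v B')"
      proof
        fix x assume x: "x \<in> V"
        have "x - (v \<bullet> x) *\<^sub>R v \<in> V'"
          using x v vv less.prems(1) by (auto simp: V'_def subspace_diff subspace_scale inner_diff_right)
        then have "x - (v \<bullet> x) *\<^sub>R v \<in> span (insert v B')"
          using B'(4) span_mono[of B' "insert v B'"] by auto
        moreover have "(v \<bullet> x) *\<^sub>R v \<in> span (insert v B')"
          by (simp add: span_base span_mul)
        ultimately have "(x - (v \<bullet> x) *\<^sub>R v) + (v \<bullet> x) *\<^sub>R v \<in> span (insert v B')"
          by (rule span_add)
        then show "x \<in> span (insert v B')" by simp
      qed
    qed
  qed
qed

lemma spectral:
  fixes M :: "real^'n^'n"
  assumes sym: "\<And>x y. x \<bullet> (M *v y) = (M *v x) \<bullet> y"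
  obtains B where "finite B" "pairwise orthogonal B"
    "\<And>b. b \<in> B \<Longrightarrow> norm b = 1" "\<And>b. b \<in> B \<Longrightarrow> M *v b = (b \<bullet> (M *v b)) *\<^sub>R b"
    "\<And>x. x = (\<Sum>b\<in>B. (b \<bullet> x) *\<^sub>R b)"
proof -
  obtain B where B: "pairwise orthogonal B" "\<forall>b\<in>B. norm b = 1 \<and> M *v b = (b \<bullet> (M *v b)) *\<^sub>R b"
    "UNIV \<subseteq> span B"
    using spectral_sub[OF sym, of UNIV] by auto
  have fin: "finite B" using B(1) by (rule pairwise_orthogonal_imp_finite)
  have bb: "b \<bullet> b = 1" if "b \<in> B" for b using B(2) that by (simp add: dot_square_norm)
  have exp: "x = (\<Sum>b\<in>B. (b \<bullet> x) *\<^sub>R b)" for x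
  proof -
    define r where "r = x - (\<Sum>b\<in>B. (b \<bullet> x / (b \<bullet> b)) *\<^sub>R b)"
    have "r \<in> span B" using B(3) by auto
    from Gram_Schmidt_step[OF B(1) this, of x] have "orthogonal r r" by (simp add: r_def)
    then have "r = 0" by (simp add: orthogonal_self)
    moreover have "(\<Sum>b\<in>B. (b \<bullet> x / (b \<bullet> b)) *\<^sub>R b) = (\<Sum>b\<in>B. (b \<bullet> x) *\<^sub>R b)"
      by (rule sum.cong) (auto simp: bb)
    ultimately show ?thesis by (simp add: r_def)
  qed
  show ?thesis using that fin B exp by blast
qed

lemma orth_coeff:
  fixes B :: "(real^'n) set"
  assumes "finite B" "pairwise orthogonal B" "\<And>b. b \<in> B \<Longrightarrow> norm b = 1" "b \<in> B"
  shows "b \<bullet> (\<Sum>b'\<in>B. c b' *\<^sub>R b') = c b"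
proof -
  have "b \<bullet> (\<Sum>b'\<in>B. c b' *\<^sub>R b') = (\<Sum>b'\<in>B. c b' * (b \<bullet> b'))" by (simp add: inner_sum_right)
  also have "\<dots> = (\<Sum>b'\<in>B. if b' = b then c b else 0)"
  proof (rule sum.cong)
    fix b' assume "b' \<in> B"
    then show "c b' * (b \<bullet> b') = (if b' = b then c b else 0)"
      using assms(2-4) by (auto simp: pairwise_def orthogonal_def dot_square_norm)
  qed simp
  also have "\<dots> = c b" using assms(1,4) by simp
  finally show ?thesis .
qed

lemma pd_sym: "pos_def_mat M \<Longrightarrow> x \<bullet> (M *v y) = (M *v x) \<bullet> y"
  unfolding pos_def_mat_def using sym_iff by blast

lemma pd_pos: "pos_def_mat M \<Longrightarrow> x \<noteq> 0 \<Longrightarrow> x \<bullet> (M *v x) > 0"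
  unfolding pos_def_mat_def by blast

lemma sqrt_exists:
  fixes Q :: "real^'n^'n"
  assumes Q: "pos_def_mat Q"
  shows "\<exists>S. pos_def_mat S \<and> S ** S = Q"
proof -
  obtain B where fin: "finite B" and po: "pairwise orthogonal B" and nb: "\<And>b. b \<in> B \<Longrightarrow> norm b = 1"
    and ev: "\<And>b. b \<in> B \<Longrightarrow> Q *v b = (b \<bullet> (Q *v b)) *\<^sub>R b"
    and exp: "\<And>x. x = (\<Sum>b\<in>B. (b \<bullet> x) *\<^sub>R b)"
    by (rule spectral[OF pd_sym[OF Q]], blast)
  define s where "s b = sqrt (b \<bullet> (Q *v b))" for b
  have lpos: "b \<bullet> (Q *v b) > 0" if "b \<in> B" for b
    using pd_pos[OF Q] nb[OF that] by (metis norm_zero zero_neq_one)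
  have spos: "s b > 0" if "b \<in> B" for b using lpos[OF that] by (simp add: s_def)
  have ss: "s b * s b = b \<bullet> (Q *v b)" if "b \<in> B" for b using lpos[OF that] by (simp add: s_def)
  define f where "f x = (\<Sum>b\<in>B. (s b * (b \<bullet> x)) *\<^sub>R b)" for x
  have lin: "linear f"
    by (rule linearI) (simp_all add: f_def inner_add_right distrib_left scaleR_add_left sum.distrib
        scaleR_sum_right mult.left_commute)
  define S where "S = matrix f"
  have Sf: "S *v x = f x" for x using matrix_vector_mul(2)[OF lin] unfolding S_def by metis
  have coef: "b \<bullet> f x = s b * (b \<bullet> x)" if "b \<in> B" for b x
    unfolding f_def by (rule orth_coeff[OF fin po nb that])
  have symS: "x \<bullet> (S *v y) = (S *v x) \<bullet> y" for x y
    by (simp add: Sf f_def inner_sum_right inner_sum_left inner_commute mult.commute mult.left_commute)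
  have quadS: "x \<bullet> (S *v x) = (\<Sum>b\<in>B. s b * (b \<bullet> x)^2)" for x
    by (simp add: Sf f_def inner_sum_right inner_commute power2_eq_square mult.commute mult.left_commute)
  have pdS: "pos_def_mat S"
    unfolding pos_def_mat_def
  proof (intro conjI allI impI)
    show "transpose S = S" using symS sym_iff by blast
  next
    fix x :: "real^'n" assume "x \<noteq> 0"
    then obtain b where b: "b \<in> B" "b \<bullet> x \<noteq> 0" using exp[of x] by (metis (no_types, lifting) scale_eq_0_iff sum.neutral)
    have "0 < s b * (b \<bullet> x)^2" using spos[OF b(1)] b(2) by simp
    also have "\<dots> \<le> (\<Sum>b\<in>B. s b * (b \<bullet> x)^2)"
    proof (rule member_le_sum[OF b(1) _ fin])
      fix c assume "c \<in> B - {b}"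
      then have "0 < s c" using spos by blast
      then show "0 \<le> s c * (c \<bullet> x)^2" by simp
    qed
    finally show "x \<bullet> (S *v x) > 0" by (simp add: quadS)
  qed
  have "S *v (S *v x) = Q *v x" for x
  proof -
    have "S *v (S *v x) = (\<Sum>b\<in>B. (s b * (s b * (b \<bullet> x))) *\<^sub>R b)"
      unfolding Sf f_def[of "f x"] by (rule sum.cong) (simp_all add: coef)
    also have "\<dots> = (\<Sum>b\<in>B. (b \<bullet> x) *\<^sub>R (Q *v b))"
    proof (rule sum.cong)
      fix b assume b: "b \<in> B"
      have "Q *v b = (s b * s b) *\<^sub>R b" using ev[OF b] ss[OF b] by simp
      then show "(s b * (s b * (b \<bullet> x))) *\<^sub>R b = (b \<bullet> x) *\<^sub>R (Q *v b)"
        by (simp add: mult.commute mult.left_commute)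
    qed simp
    also have "\<dots> = Q *v (\<Sum>b\<in>B. (b \<bullet> x) *\<^sub>R b)"
      by (simp add: vec.sum matrix_vector_mult_scaleR)
    also have "\<dots> = Q *v x" using exp[of x] by simp
    finally show ?thesis .
  qed
  then have "S ** S = Q" by (simp add: matrix_eq matrix_vector_mul_assoc)
  with pdS show ?thesis by blast
qed

lemma sqrt_unique:
  fixes S T :: "real^'n^'n"
  assumes S: "pos_def_mat S" and T: "pos_def_mat T" and eq: "S ** S = T ** T"
  shows "S = T"
proof -
  define D where "D = S - T"
  have symD: "x \<bullet> (D *v y) = (D *v x) \<bullet> y" for x y
    by (simp add: D_def matrix_vector_mult_diff_rdistrib inner_diff_left inner_diff_right pd_sym[OF S] pd_sym[OF T])
  obtain B where fin: "finite B" and po: "pairwise orthogonal B" and nb: "\<And>b. b \<in> B \<Longrightarrow> norm b = 1"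
    and ev: "\<And>b. b \<in> B \<Longrightarrow> D *v b = (b \<bullet> (D *v b)) *\<^sub>R b"
    and exp: "\<And>x. x = (\<Sum>b\<in>B. (b \<bullet> x) *\<^sub>R b)"
    by (rule spectral[OF symD], blast)
  have key: "S *v (D *v y) + D *v (T *v y) = 0" for y
  proof -
    have "S *v (D *v y) + D *v (T *v y) = (S ** S) *v y - (T ** T) *v y"
      by (simp add: D_def matrix_vector_mult_diff_rdistrib matrix_vector_mult_diff_distrib matrix_vector_mul_assoc[symmetric])
    then show ?thesis using eq by simp
  qed
  have Db: "D *v b = 0" if b: "b \<in> B" for b
  proof -
    define \<mu> where "\<mu> = b \<bullet> (D *v b)"
    have bne: "b \<noteq> 0" using nb[OF b] by auto
    have "0 = b \<bullet> (S *v (D *v b) + D *v (T *v b))" using key[of b] by simp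
    also have "\<dots> = b \<bullet> (S *v (D *v b)) + (D *v b) \<bullet> (T *v b)" by (simp add: inner_add_right symD)
    also have "\<dots> = \<mu> * (b \<bullet> (S *v b) + b \<bullet> (T *v b))"
      using ev[OF b] unfolding \<mu>_def[symmetric]
      by (simp add: matrix_vector_mult_scaleR distrib_left)
    finally have "\<mu> * (b \<bullet> (S *v b) + b \<bullet> (T *v b)) = 0" by simp
    moreover have "b \<bullet> (S *v b) + b \<bullet> (T *v b) > 0" using pd_pos[OF S bne] pd_pos[OF T bne] by simp
    ultimately have "\<mu> = 0" by simp
    then show ?thesis using ev[OF b] unfolding \<mu>_def[symmetric] by simp
  qed
  have "D *v x = 0" for x
  proof -
    have "D *v x = D *v (\<Sum>b\<in>B. (b \<bullet> x) *\<^sub>R b)" using exp[of x] by simp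
    also have "\<dots> = (\<Sum>b\<in>B. (b \<bullet> x) *\<^sub>R (D *v b))" by (simp add: vec.sum matrix_vector_mult_scaleR)
    also have "\<dots> = 0" using Db by simp
    finally show ?thesis .
  qed
  then have "S *v x = T *v x" for x by (simp add: D_def matrix_vector_mult_diff_rdistrib)
  then show ?thesis by (simp add: matrix_eq)
qed

lemma inv_facts:
  fixes Om :: "real^'n^'n"
  assumes Om: "pos_def_mat Om"
  shows "Om ** matrix_inv Om = mat 1" "matrix_inv Om ** Om = mat 1" "pos_def_mat (matrix_inv Om)"
proof -
  have "inj ((*v) Om)"
  proof (rule injI)
    fix x y assume "Om *v x = Om *v y"
    then have "Om *v (x - y) = 0" by (simp add: matrix_vector_mult_diff_distrib)
    then have "(x - y) \<bullet> (Om *v (x - y)) = 0" by simp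
    then show "x = y" using pd_pos[OF Om, of "x - y"] by (cases "x - y = 0") auto
  qed
  then have "invertible Om" using matrix_left_invertible_injective invertible_left_inverse by blast
  then have "Om ** matrix_inv Om = mat 1 \<and> matrix_inv Om ** Om = mat 1"
    unfolding invertible_def matrix_inv_def by (rule someI_ex)
  then show i1: "Om ** matrix_inv Om = mat 1" and i2: "matrix_inv Om ** Om = mat 1" by auto
  let ?I = "matrix_inv Om"
  have r1: "Om *v (?I *v x) = x" for x using i1 by (simp add: matrix_vector_mul_assoc)
  have r2: "?I *v (Om *v x) = x" for x using i2 by (simp add: matrix_vector_mul_assoc)
  have symI: "x \<bullet> (?I *v y) = (?I *v x) \<bullet> y" for x y
  proof -
    have "x \<bullet> (?I *v y) = (Om *v (?I *v x)) \<bullet> (?I *v y)" by (simp add: r1)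
    also have "\<dots> = (?I *v x) \<bullet> (Om *v (?I *v y))" by (simp add: pd_sym[OF Om])
    also have "\<dots> = (?I *v x) \<bullet> y" by (simp add: r1)
    finally show ?thesis .
  qed
  show "pos_def_mat ?I"
    unfolding pos_def_mat_def
  proof (intro conjI allI impI)
    show "transpose ?I = ?I" using symI sym_iff by blast
  next
    fix x :: "real^'n" assume x: "x \<noteq> 0"
    define y where "y = ?I *v x"
    have yne: "y \<noteq> 0" using x r1[of x] by (auto simp: y_def)
    have "x \<bullet> (?I *v x) = (Om *v y) \<bullet> y" by (simp add: y_def r1)
    also have "\<dots> = y \<bullet> (Om *v y)" by (simp add: inner_commute)
    finally show "x \<bullet> (?I *v x) > 0" using pd_pos[OF Om yne] by simp
  qed
qed

lemma inv_sqrt_sq: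
  assumes "pos_def_mat (Om :: real^'n^'n)"
  shows "inv_sqrt_mat Om ** inv_sqrt_mat Om = matrix_inv Om"
proof -
  have ex1: "\<exists>!S. pos_def_mat S \<and> S ** S = matrix_inv Om"
    using sqrt_exists[OF inv_facts(3)[OF assms]] sqrt_unique by metis
  show ?thesis unfolding inv_sqrt_mat_def using theI'[OF ex1] by blast
qed

lemma path_deriv:
  fixes Mf :: "real^'b \<Rightarrow> real^'m" and mu0 mu :: "real^'m^'t"
  assumes Md: "(Mf has_derivative Md) (at (b0 + r *\<^sub>R d) within B)"
    and sub: "(\<lambda>s. b0 + s *\<^sub>R d) ` S \<subseteq> B"
  shows "((\<lambda>s. (mu0 + s *\<^sub>R (mu - mu0)) *v Mf (b0 + s *\<^sub>R d)) has_vector_derivative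
          (mu0 *v Md d + (r *\<^sub>R ((mu - mu0) *v Md d) + 1 *\<^sub>R ((mu - mu0) *v Mf (b0 + r *\<^sub>R d)))))
          (at r within S)"
proof -
  have g: "((\<lambda>s. b0 + s *\<^sub>R d) has_vector_derivative d) (at r within S)"
    by (auto intro!: derivative_eq_intros)
  have Y: "((\<lambda>s. Mf (b0 + s *\<^sub>R d)) has_vector_derivative Md d) (at r within S)"
    using vector_derivative_diff_chain_within[OF g has_derivative_subset[OF Md sub]] by (simp add: o_def)
  have lin: "((\<lambda>s. A *v Mf (b0 + s *\<^sub>R d)) has_vector_derivative A *v Md d) (at r within S)"
    for A :: "real^'m^'t"
    using vector_derivative_diff_chain_within[OF Y
        bounded_linear_imp_has_derivative[OF matrix_vector_mul_bounded_linear[of A]]]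
    by (simp add: o_def)
  have L3: "((\<lambda>s. s *\<^sub>R ((mu - mu0) *v Mf (b0 + s *\<^sub>R d))) has_vector_derivative
      (r *\<^sub>R ((mu - mu0) *v Md d) + 1 *\<^sub>R ((mu - mu0) *v Mf (b0 + r *\<^sub>R d)))) (at r within S)"
    by (rule has_vector_derivative_scaleR[OF DERIV_ident lin])
  have "((\<lambda>s. mu0 *v Mf (b0 + s *\<^sub>R d) + s *\<^sub>R ((mu - mu0) *v Mf (b0 + s *\<^sub>R d))) has_vector_derivative
      (mu0 *v Md d + (r *\<^sub>R ((mu - mu0) *v Md d) + 1 *\<^sub>R ((mu - mu0) *v Mf (b0 + r *\<^sub>R d)))))
      (at r within S)"
    by (rule has_vector_derivative_add[OF lin L3])
  moreover have "(\<lambda>s. mu0 *v Mf (b0 + s *\<^sub>R d) + s *\<^sub>R ((mu - mu0) *v Mf (b0 + s *\<^sub>R d)))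
      = (\<lambda>s. (mu0 + s *\<^sub>R (mu - mu0)) *v Mf (b0 + s *\<^sub>R d))"
    by (simp add: matrix_vector_mult_add_rdistrib scaleR_matrix_vector_assoc)
  ultimately show ?thesis by simp
qed

lemma entry_bound:
  fixes C :: "real^'b^'t" and h :: "real^'b"
  assumes "max_abs_entry C \<le> r" "vec_l1_norm h \<le> c" "0 \<le> r"
  shows "vec_sup_norm (C *v h) \<le> r * c"
proof -
  have fin: "finite {\<bar>C $ i $ j\<bar> | i j. True}"
  proof -
    have "{\<bar>C $ i $ j\<bar> | i j. True} = (\<lambda>(i, j). \<bar>C $ i $ j\<bar>) ` UNIV" by auto
    then show ?thesis by simp
  qed
  have ent: "\<bar>C $ i $ j\<bar> \<le> r" for i j
  proof -
    have "\<bar>C $ i $ j\<bar> \<le> max_abs_entry C" unfolding max_abs_entry_def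
      by (rule Max_ge[OF fin]) blast
    then show ?thesis using assms(1) by simp
  qed
  have "\<bar>(C *v h) $ i\<bar> \<le> r * c" for i
  proof -
    have "\<bar>(C *v h) $ i\<bar> = \<bar>\<Sum>j\<in>UNIV. C $ i $ j * h $ j\<bar>" by (simp add: matrix_vector_mult_def)
    also have "\<dots> \<le> (\<Sum>j\<in>UNIV. \<bar>C $ i $ j\<bar> * \<bar>h $ j\<bar>)" by (rule order_trans[OF sum_abs]) (simp add: abs_mult)
    also have "\<dots> \<le> (\<Sum>j\<in>UNIV. r * \<bar>h $ j\<bar>)" by (rule sum_mono) (simp add: ent mult_right_mono)
    also have "\<dots> = r * vec_l1_norm h" by (simp add: vec_l1_norm_def sum_distrib_left)
    also have "\<dots> \<le> r * c" using assms(2,3) by (simp add: mult_left_mono)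
    finally show ?thesis .
  qed
  then show ?thesis unfolding vec_sup_norm_def by (simp add: Max_le_iff)
qed

theorem lemma2p4:
  fixes P :: "'w measure"
    and Theta :: "(real^'t) set" and B :: "(real^'b) set"
    and m :: "'w \<Rightarrow> real^'t \<Rightarrow> real^'b \<Rightarrow> real^'m"
    and theta0 :: "real^'t" and beta0 :: "real^'b"
    and G :: "real^'b^'m" and Omega :: "real^'m^'m" and A :: "real^'t^'m"
    and nrm_o :: "real^'b^'t \<Rightarrow> real"
    and rN :: "nat \<Rightarrow> real" and lam :: "nat \<Rightarrow> real"
    and gamma0 :: "nat \<Rightarrow> real^'b^'t"
  assumes "prob_space P"
    and "theta0 \<in> Theta" and "beta0 \<in> B" and "convex B"
    and "\<forall>beta\<in>B. integrable P (\<lambda>w. m w theta0 beta)"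
    and "(\<integral>w. m w theta0 beta0 \<partial>P) = 0"
    and "\<forall>beta\<in>B. (\<lambda>b. \<integral>w. m w theta0 b \<partial>P) differentiable (at beta within B)"
    and "((\<lambda>b. \<integral>w. m w theta0 b \<partial>P) has_derivative (\<lambda>h. G *v h)) (at beta0 within B)"
    and "pos_def_mat Omega"
    and "is_norm nrm_o"
    and "\<forall>N. rN N > 0"
    and "\<forall>N. max_abs_entry (transpose A ** inv_sqrt_mat Omega ** (inv_sqrt_mat Omega ** G)
               - gamma0 N ** (transpose (inv_sqrt_mat Omega ** G) ** (inv_sqrt_mat Omega ** G)))
             \<le> rN N"
    and "\<forall>N. \<forall>gamma. max_abs_entry (transpose A ** inv_sqrt_mat Omega ** (inv_sqrt_mat Omega ** G)
               - gamma ** (transpose (inv_sqrt_mat Omega ** G) ** (inv_sqrt_mat Omega ** G)))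
             \<le> rN N \<longrightarrow> nrm_o (gamma0 N) \<le> nrm_o gamma"
    and "\<forall>N. lam N > 0" and "lam \<in> o(\<lambda>N. 1 / sqrt (real N))"
  shows "neyman_near_orth_seq P
           (\<lambda>w theta (eta :: (real^'b) \<times> (real^'m^'t)). snd eta *v m w theta (fst eta))
           vec_sup_norm theta0
           (\<lambda>N. (beta0, transpose A ** matrix_inv Omega
                   - gamma0 N ** transpose (inv_sqrt_mat Omega ** G) ** inv_sqrt_mat Omega))
           (\<lambda>N. {beta \<in> B. vec_l1_norm (beta - beta0) \<le> lam N / rN N} \<times> UNIV)
           lam"
proof -
  note Opd = assms(9)
  define S where "S = inv_sqrt_mat Omega"
  define Oi where "Oi = matrix_inv Omega"
  define Mf where "Mf = (\<lambda>b. \<integral>w. m w theta0 b \<partial>P)"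
  have SS: "S *v (S *v x) = Oi *v x" for x
    using inv_sqrt_sq[OF Opd] by (simp add: S_def Oi_def matrix_vector_mul_assoc)
  have int_eq: "(\<integral>w. mu *v m w theta0 b \<partial>P) = mu *v Mf b" if "b \<in> B" for mu :: "real^'m^'t" and b
    using integral_bounded_linear[OF matrix_vector_mul_bounded_linear[of mu], where f="\<lambda>w. m w theta0 b" and M=P]
      assms(5) that by (simp add: Mf_def)
  have M0: "Mf beta0 = 0" using assms(6) by (simp add: Mf_def)
  have diffM: "Mf differentiable (at b within B)" if "b \<in> B" for b
    using assms(7) that unfolding Mf_def by blast
  have derM0: "(Mf has_derivative (\<lambda>h. G *v h)) (at beta0 within B)"
    using assms(8) unfolding Mf_def .
  have pathB: "(\<lambda>s. beta0 + s *\<^sub>R (beta - beta0)) ` {0..<1} \<subseteq> B" if "beta \<in> B" for beta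
  proof
    fix y assume "y \<in> (\<lambda>s. beta0 + s *\<^sub>R (beta - beta0)) ` {0..<1}"
    then obtain s where s: "s \<in> {0..<1}" "y = beta0 + s *\<^sub>R (beta - beta0)" by auto
    have "y = (1 - s) *\<^sub>R beta0 + s *\<^sub>R beta" using s(2) by (simp add: algebra_simps)
    moreover have "(1 - s) *\<^sub>R beta0 + s *\<^sub>R beta \<in> B"
      using convexD[OF assms(4) assms(3) that, of "1 - s" s] s(1) by simp
    ultimately show "y \<in> B" by simp
  qed
  have nbot: "at (0::real) within {0..<1} \<noteq> bot"
  proof -
    have "{0::real..<1} - {0} = {0<..<1}" by auto
    then have "closure ({0::real..<1} - {0}) = {0..1}" by simp
    then show ?thesis by (simp add: at_within_eq_bot_iff)
  qed
  show ?thesis unfolding neyman_near_orth_seq_def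
  proof (intro conjI allI)
    fix N show "0 < lam N" using assms(14) by blast
  next
    show "lam \<in> o(\<lambda>N. 1 / sqrt (real N))" using assms(15) .
  next
    fix N
    define mu0 where "mu0 = transpose A ** Oi - gamma0 N ** transpose (S ** G) ** S"
    define C where "C = transpose A ** S ** (S ** G)
               - gamma0 N ** (transpose (S ** G) ** (S ** G))"
    have Cb: "max_abs_entry C \<le> rN N" using assms(12) by (simp add: C_def S_def)
    have muG: "mu0 *v (G *v h) = C *v h" for h
      by (simp add: mu0_def C_def matrix_vector_mult_diff_rdistrib matrix_vector_mul_assoc[symmetric] SS)
    define T where "T = {beta \<in> B. vec_l1_norm (beta - beta0) \<le> lam N / rN N} \<times> (UNIV :: (real^'m^'t) set)"
    define F where "F eta s = (\<integral>w. snd ((beta0, mu0) + s *\<^sub>R (eta - (beta0, mu0))) *v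
                  m w theta0 (fst ((beta0, mu0) + s *\<^sub>R (eta - (beta0, mu0)))) \<partial>P)" for eta s
    have Feq: "F (beta, mu) s = (mu0 + s *\<^sub>R (mu - mu0)) *v Mf (beta0 + s *\<^sub>R (beta - beta0))"
      if "beta \<in> B" "s \<in> {0..<1}" for beta mu s
    proof -
      have "beta0 + s *\<^sub>R (beta - beta0) \<in> B" using pathB[OF that(1)] that(2) by blast
      then show ?thesis unfolding F_def by (simp add: int_eq)
    qed
    have "neyman_near_orth P
           (\<lambda>w theta (eta :: (real^'b) \<times> (real^'m^'t)). snd eta *v m w theta (fst eta))
           vec_sup_norm theta0 (beta0, mu0) T (lam N)"
      unfolding neyman_near_orth_def F_def[symmetric]
    proof (intro conjI ballI allI impI)
      show "(\<integral>w. snd (beta0, mu0) *v m w theta0 (fst (beta0, mu0)) \<partial>P) = 0"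
        using int_eq[OF assms(3), of mu0] M0 by simp
    next
      fix eta r assume eta: "eta \<in> T" and r: "r \<in> {0..<1::real}"
      obtain beta mu where e: "eta = (beta, mu)" by (cases eta)
      have beta: "beta \<in> B" using eta by (simp add: T_def e)
      have "beta0 + r *\<^sub>R (beta - beta0) \<in> B" using pathB[OF beta] r by blast
      then obtain Md where Md: "(Mf has_derivative Md) (at (beta0 + r *\<^sub>R (beta - beta0)) within B)"
        using diffM unfolding differentiable_def by blast
      note pd = path_deriv[OF Md pathB[OF beta], of mu0 mu]
      have "(F eta has_vector_derivative
          (mu0 *v Md (beta - beta0) + (r *\<^sub>R ((mu - mu0) *v Md (beta - beta0)) + 1 *\<^sub>R ((mu - mu0) *v Mf (beta0 + r *\<^sub>R (beta - beta0))))))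
          (at r within {0..<1})"
        by (rule has_vector_derivative_transform_within[OF pd zero_less_one r]) (simp add: Feq[OF beta] e)
      then show "\<exists>D. (F eta has_vector_derivative D) (at r within {0..<1})" by blast
    next
      fix eta D assume eta: "eta \<in> T" and D: "(F eta has_vector_derivative D) (at 0 within {0..<1})"
      obtain beta mu where e: "eta = (beta, mu)" by (cases eta)
      have beta: "beta \<in> B" and l1: "vec_l1_norm (beta - beta0) \<le> lam N / rN N"
        using eta by (simp_all add: T_def e)
      have Md: "(Mf has_derivative (\<lambda>h. G *v h)) (at (beta0 + 0 *\<^sub>R (beta - beta0)) within B)"
        using derM0 by simp
      note pd = path_deriv[OF Md pathB[OF beta], of mu0 mu]
      have "(F eta has_vector_derivative
          (mu0 *v (G *v (beta - beta0)) + (0 *\<^sub>R ((mu - mu0) *v (G *v (beta - beta0))) + 1 *\<^sub>R ((mu - mu0) *v Mf (beta0 + 0 *\<^sub>R (beta - beta0))))))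
          (at 0 within {0..<1})"
        by (rule has_vector_derivative_transform_within[OF pd zero_less_one]) (simp_all add: Feq[OF beta] e)
      then have "(F eta has_vector_derivative C *v (beta - beta0)) (at 0 within {0..<1})"
        by (simp add: M0 muG)
      with D have "D = C *v (beta - beta0)" using vector_derivative_unique_within[OF nbot] by blast
      moreover have "vec_sup_norm (C *v (beta - beta0)) \<le> rN N * (lam N / rN N)"
        by (rule entry_bound[OF Cb l1]) (use assms(11) in \<open>simp add: less_imp_le\<close>)
      moreover have "rN N * (lam N / rN N) = lam N" using assms(11) by (simp add: less_imp_neq[symmetric])
      ultimately show "vec_sup_norm D \<le> lam N" by simp
    qed
    then show "neyman_near_orth P
           (\<lambda>w theta (eta :: (real^'b) \<times> (real^'m^'t)). snd eta *v m w theta (fst eta))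
           vec_sup_norm theta0
           (beta0, transpose A ** matrix_inv Omega
                   - gamma0 N ** transpose (inv_sqrt_mat Omega ** G) ** inv_sqrt_mat Omega)
           ({beta \<in> B. vec_l1_norm (beta - beta0) \<le> lam N / rN N} \<times> UNIV)
           (lam N)"
      by (simp add: mu0_def T_def S_def Oi_def)
  qed
qed

end
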